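(* Let $n\ge2$ and let $\mathbf W$ be uniformly distributed on $\mathcal W^n$. Then for each $1\le j\le n-1$, \[ \mathbb E\left[\frac{B_j(\mathbf W)}{n}\right]=\frac{j}{\binom n2}, \] where $B_j(\mathbf w)$ is the number of leaves among the two children of the rank-$j$ internal node of $\mathbf w$.
   Context: $\mathcal W^n$ is the set of ranked leaf-labelled rooted binary tree topologies with leaves $\{1,\dots,n\}$: binary trees with $n-1$ internal nodes totally ordered by rank $1,\dots,n-1$ (rank 1 is the root; each internal node has larger rank than its parent). Its cardinality is $n!(n-1)!/2^{n-1}$. *)

theory Defs
  imports "HOL-Probability.Probability" "HOL-Library.Multiset"
begin

text \<open>Rooted trees whose leaves carry a label and whose internal nodes carry a rank.
  Children are kept in a multiset, so trees are unordered (topologies).\<close>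
datatype rtree = Leaf nat | Node nat "rtree multiset"

primrec is_leaf :: "rtree \<Rightarrow> bool" where
  "is_leaf (Leaf i) = True"
| "is_leaf (Node r ts) = False"

primrec leaves :: "rtree \<Rightarrow> nat multiset" where
  "leaves (Leaf i) = {#i#}"
| "leaves (Node r ts) = \<Sum>\<^sub># (image_mset leaves ts)"

primrec ranks :: "rtree \<Rightarrow> nat multiset" where
  "ranks (Leaf i) = {#}"
| "ranks (Node r ts) = add_mset r (\<Sum>\<^sub># (image_mset ranks ts))"

primrec child_ok :: "nat \<Rightarrow> rtree \<Rightarrow> bool" where
  "child_ok r (Leaf i) = True"
| "child_ok r (Node s ts) = (r < s)"

primrec wf_rtree :: "rtree \<Rightarrow> bool" where
  "wf_rtree (Leaf i) = True"
| "wf_rtree (Node r ts) = (size ts = 2 \<and> (\<forall>t\<in>#ts. child_ok r t) \<and> Ball (set_mset (image_mset wf_rtree ts)) id)"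

definition ranked_trees :: "nat \<Rightarrow> rtree set" where
  "ranked_trees n = {t. wf_rtree t \<and> leaves t = mset [1..<n+1] \<and> ranks t = mset [1..<n]}"

primrec B :: "nat \<Rightarrow> rtree \<Rightarrow> nat" where
  "B j (Leaf i) = 0"
| "B j (Node r ts) = (if r = j then size (filter_mset is_leaf ts) else 0) + \<Sum>\<^sub># (image_mset (B j) ts)"

end

theory Submission
  imports Defs
begin


primrec graft :: "nat \<Rightarrow> nat \<Rightarrow> nat \<Rightarrow> rtree \<Rightarrow> rtree" where
  "graft a b r (Leaf x) = (if x = a then Node r {#Leaf a, Leaf b#} else Leaf x)"
| "graft a b r (Node s ts) = Node s (image_mset (graft a b r) ts)"

primrec cut :: "nat \<Rightarrow> nat \<Rightarrow> rtree \<Rightarrow> rtree" where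
  "cut a r (Leaf x) = Leaf x"
| "cut a r (Node s ts) = (if s = r then Leaf a else Node s (image_mset (cut a r) ts))"

primrec sub :: "nat \<Rightarrow> rtree \<Rightarrow> rtree multiset" where
  "sub r (Leaf x) = {#}"
| "sub r (Node s ts) = (if s = r then ts else {#}) + \<Sum>\<^sub># (image_mset (sub r) ts)"

primrec pa :: "nat \<Rightarrow> nat \<Rightarrow> rtree \<Rightarrow> nat" where
  "pa j a (Leaf x) = 0"
| "pa j a (Node s ts) = (if s = j then count ts (Leaf a) else 0) + \<Sum>\<^sub># (image_mset (pa j a) ts)"

lemma sum_mset_add_cong:
  assumes "\<And>t. t \<in># ts \<Longrightarrow> f t = g t + h t"
  shows "\<Sum>\<^sub># (image_mset f ts) = \<Sum>\<^sub># (image_mset g ts) + \<Sum>\<^sub># (image_mset h ts)"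
  using assms by (induction ts) (auto simp: algebra_simps)

lemma sum_mset_zero_cong:
  assumes "\<And>t. t \<in># ts \<Longrightarrow> f t = 0"
  shows "\<Sum>\<^sub># (image_mset f ts) = 0"
  using assms by (induction ts) auto

lemma replicate_mset_plus: "replicate_mset (m + n) x = replicate_mset m x + replicate_mset n x"
  by (induction m) auto

lemma sum_mset_replicate:
  "\<Sum>\<^sub># (image_mset (\<lambda>t. replicate_mset (f t) b) ts) = replicate_mset (\<Sum>\<^sub># (image_mset f ts)) b"
  by (induction ts) (auto simp: replicate_mset_plus)

lemma sum_mset_repeat:
  "\<Sum>\<^sub># (image_mset (\<lambda>t. repeat_mset (f t) M) ts) = repeat_mset (\<Sum>\<^sub># (image_mset f ts)) M"
  by (induction ts) (auto simp: repeat_mset_distrib)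

lemma sum_mset_count:
  "\<Sum>\<^sub># (image_mset (\<lambda>t. count (g t) a) ts) = count (\<Sum>\<^sub># (image_mset g ts)) a"
  by (induction ts) auto

lemma leaves_graft:
  "leaves (graft a b r t) = leaves t + replicate_mset (count (leaves t) a) b"
proof (induction t)
  case (Node s ts)
  have "\<Sum>\<^sub># (image_mset (leaves \<circ> graft a b r) ts) =
     \<Sum>\<^sub># (image_mset leaves ts) + \<Sum>\<^sub># (image_mset (\<lambda>t. replicate_mset (count (leaves t) a) b) ts)"
    by (rule sum_mset_add_cong) (simp add: Node)
  then show ?case by (simp add: sum_mset_replicate sum_mset_count image_mset.compositionality)
qed auto

lemma ranks_graft:
  "ranks (graft a b r t) = ranks t + replicate_mset (count (leaves t) a) r"
proof (induction t)
  case (Node s ts)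
  have "\<Sum>\<^sub># (image_mset (ranks \<circ> graft a b r) ts) =
     \<Sum>\<^sub># (image_mset ranks ts) + \<Sum>\<^sub># (image_mset (\<lambda>t. replicate_mset (count (leaves t) a) r) ts)"
    by (rule sum_mset_add_cong) (simp add: Node)
  then show ?case by (simp add: sum_mset_replicate sum_mset_count image_mset.compositionality)
qed auto


lemma wf_graft:
  "wf_rtree t \<Longrightarrow> (\<forall>s\<in>#ranks t. s < r) \<Longrightarrow> wf_rtree (graft a b r t)"
proof (induction t)
  case (Node s ts)
  have ok: "child_ok s (graft a b r t)" if "t \<in># ts" for t
  proof (cases t)
    case (Leaf x) then show ?thesis using Node.prems by auto
  next
    case (Node s' ts') then show ?thesis using Node.prems that by auto
  qed
  have "wf_rtree (graft a b r t)" if "t \<in># ts" for t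
    using Node that by auto
  then show ?case using Node.prems ok by auto
qed auto

lemma cut_graft:
  "r \<notin># ranks t \<Longrightarrow> cut a r (graft a b r t) = t"
proof (induction t)
  case (Node s ts)
  then have "image_mset (cut a r \<circ> graft a b r) ts = image_mset id ts"
    by (intro image_mset_cong) auto
  then show ?case using Node.prems by (simp add: image_mset.compositionality)
qed auto

lemma sub_graft:
  "r \<notin># ranks t \<Longrightarrow> sub r (graft a b r t) = repeat_mset (count (leaves t) a) {#Leaf a, Leaf b#}"
proof (induction t)
  case (Node s ts)
  have "\<Sum>\<^sub># (image_mset (sub r \<circ> graft a b r) ts) =
     \<Sum>\<^sub># (image_mset (\<lambda>t. repeat_mset (count (leaves t) a) {#Leaf a, Leaf b#}) ts)"
    using Node by (intro arg_cong[where f=sum_mset] image_mset_cong) auto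
  also have "\<dots> = repeat_mset (count (leaves (Node s ts)) a) {#Leaf a, Leaf b#}"
    by (simp only: sum_mset_repeat sum_mset_count leaves.simps)
  finally show ?case using Node.prems by (simp add: image_mset.compositionality)
qed auto

lemma B_zero: "j \<notin># ranks t \<Longrightarrow> B j t = 0"
  by (induction t) (auto intro: sum_mset_zero_cong)

lemma pa_zero: "j \<notin># ranks t \<Longrightarrow> pa j a t = 0"
  by (induction t) (auto intro: sum_mset_zero_cong)

lemma sub_zero: "r \<notin># ranks t \<Longrightarrow> sub r t = {#}"
proof (induction t)
  case (Node s ts)
  then have "\<Sum>\<^sub># (image_mset (sub r) ts) = \<Sum>\<^sub># (image_mset (\<lambda>_. {#}) ts)"
    by (intro arg_cong[where f=sum_mset] image_mset_cong) auto
  then show ?case using Node.prems by simp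
qed auto

lemma cut_id: "r \<notin># ranks t \<Longrightarrow> cut a r t = t"
proof (induction t)
  case (Node s ts)
  then have "image_mset (cut a r) ts = image_mset id ts"
    by (intro image_mset_cong) auto
  then show ?case using Node.prems by simp
qed auto

lemma graft_id: "a \<notin># leaves t \<Longrightarrow> graft a b r t = t"
proof (induction t)
  case (Node s ts)
  then have "image_mset (graft a b r) ts = image_mset id ts"
    by (intro image_mset_cong) auto
  then show ?case using Node.prems by simp
qed auto

lemma leaf_filter_graft:
  "size (filter_mset is_leaf (image_mset (graft a b r) ts)) + count ts (Leaf a)
     = size (filter_mset is_leaf ts)"
proof (induction ts)
  case (add t ts)
  then show ?case by (cases t) auto
qed auto

lemma B_graft:
  "r \<notin># ranks t \<Longrightarrow>
   B j (graft a b r t) + pa j a t = B j t + (if j = r then 2 * count (leaves t) a else 0)"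
proof (induction t)
  case (Leaf x)
  then show ?case by auto
next
  case (Node s ts)
  have 1: "\<Sum>\<^sub># (image_mset (\<lambda>t. B j (graft a b r t) + pa j a t) ts) =
     \<Sum>\<^sub># (image_mset (B j) ts) + \<Sum>\<^sub># (image_mset (\<lambda>t. (if j = r then 2 * count (leaves t) a else 0)) ts)"
    by (rule sum_mset_add_cong) (use Node in auto)
  have 2: "\<Sum>\<^sub># (image_mset (\<lambda>t. B j (graft a b r t) + pa j a t) ts) =
     \<Sum>\<^sub># (image_mset (B j \<circ> graft a b r) ts) + \<Sum>\<^sub># (image_mset (pa j a) ts)"
    by (rule sum_mset_add_cong) auto
  have 3: "\<Sum>\<^sub># (image_mset (\<lambda>t. (if j = r then 2 * count (leaves t) a else 0)) ts)
     = (if j = r then 2 * count (leaves (Node s ts)) a else 0)"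
    by (auto simp: sum_mset_count[symmetric] sum_mset_distrib_left)
  show ?case using 1 2 3 Node.prems leaf_filter_graft[of a b r ts]
    by (auto simp: image_mset.compositionality)
qed


lemma sum_count_leaf:
  "finite A \<Longrightarrow> (\<forall>x. Leaf x \<in># ts \<longrightarrow> x \<in> A) \<Longrightarrow>
   (\<Sum>a\<in>A. count ts (Leaf a)) = size (filter_mset is_leaf ts)"
proof (induction ts)
  case (add t ts)
  show ?case
  proof (cases t)
    case (Leaf x)
    then have "x \<in> A" using add.prems by auto
    then have "(\<Sum>a\<in>A. count (add_mset t ts) (Leaf a)) = (\<Sum>a\<in>A. count ts (Leaf a)) + (\<Sum>a\<in>A. if a = x then 1 else 0)"
      using Leaf by (simp add: sum.distrib[symmetric]) (intro sum.cong, auto)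
    also have "(\<Sum>a\<in>A. if a = x then 1 else 0) = (1::nat)" using \<open>x \<in> A\<close> add.prems by simp
    finally show ?thesis using add Leaf by auto
  next
    case (Node s ts')
    then show ?thesis using add by auto
  qed
qed auto

lemma sum_sum_mset_swap:
  "(\<Sum>a\<in>A. \<Sum>\<^sub># (image_mset (f a) ts)) = \<Sum>\<^sub># (image_mset (\<lambda>t. \<Sum>a\<in>A. f a t) ts)"
  by (induction ts) (auto simp: sum.distrib)

lemma sum_pa:
  "finite A \<Longrightarrow> set_mset (leaves t) \<subseteq> A \<Longrightarrow> (\<Sum>a\<in>A. pa j a t) = B j t"
proof (induction t)
  case (Leaf x)
  then show ?case by simp
next
  case (Node s ts)
  have sub: "set_mset (leaves t) \<subseteq> A" if "t \<in># ts" for t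
    using Node.prems that by (auto dest: multi_member_split)
  have lf: "\<forall>x. Leaf x \<in># ts \<longrightarrow> x \<in> A"
    using sub by fastforce
  have "(\<Sum>a\<in>A. pa j a (Node s ts)) = (\<Sum>a\<in>A. (if s = j then count ts (Leaf a) else 0))
        + (\<Sum>a\<in>A. \<Sum>\<^sub># (image_mset (pa j a) ts))"
    by (simp add: sum.distrib)
  also have "(\<Sum>a\<in>A. \<Sum>\<^sub># (image_mset (pa j a) ts)) = \<Sum>\<^sub># (image_mset (B j) ts)"
    unfolding sum_sum_mset_swap
    by (intro arg_cong[where f=sum_mset] image_mset_cong) (use Node sub in auto)
  also have "(\<Sum>a\<in>A. (if s = j then count ts (Leaf a) else 0)) = (if s = j then size (filter_mset is_leaf ts) else 0)"
    using sum_count_leaf[OF Node.prems(1) lf] by auto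
  finally show ?case by simp
qed


lemma count_sum_zero: "count (\<Sum>\<^sub># (image_mset f ts)) r = 0 \<Longrightarrow> t \<in># ts \<Longrightarrow> r \<notin># f t"
  by (auto dest!: multi_member_split)

lemma split_r:
  "count (\<Sum>\<^sub># (image_mset ranks ts)) r = 1 \<Longrightarrow>
   \<exists>t0 ts'. ts = add_mset t0 ts' \<and> count (ranks t0) r = 1 \<and> (\<forall>t\<in>#ts'. r \<notin># ranks t)"
proof (induction ts)
  case (add t ts)
  show ?case
  proof (cases "count (ranks t) r = 1")
    case True
    then have "count (\<Sum>\<^sub># (image_mset ranks ts)) r = 0" using add.prems by simp
    then show ?thesis using True count_sum_zero[of ranks ts r] by blast
  next
    case False
    then have "count (\<Sum>\<^sub># (image_mset ranks ts)) r = 1" "count (ranks t) r = 0" using add.prems by auto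
    then obtain t0 ts' where "ts = add_mset t0 ts'" "count (ranks t0) r = 1" "\<forall>t\<in>#ts'. r \<notin># ranks t"
      using add.IH by blast
    then show ?thesis using \<open>count (ranks t) r = 0\<close>
      by (intro exI[of _ t0] exI[of _ "add_mset t ts'"]) (auto simp: not_in_iff)
  qed
qed auto

lemma image_cut_id: "\<forall>t\<in>#M. r \<notin># ranks t \<Longrightarrow> image_mset (cut a r) M = M"
  by (induction M) (auto simp: cut_id)

lemma image_graft_id: "\<forall>t\<in>#M. a \<notin># leaves t \<Longrightarrow> image_mset (graft a b r) M = M"
  by (induction M) (auto simp: graft_id)

lemma child_ok_cut: "child_ok s t \<Longrightarrow> child_ok s (cut a r t)"
  by (cases t) auto

lemma ranks_child: "x \<in># ranks t \<Longrightarrow> t \<in># ts \<Longrightarrow> x \<in># ranks (Node s ts)"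
  by (auto dest!: multi_member_split)

lemma leaves_child: "x \<in># leaves t \<Longrightarrow> t \<in># ts \<Longrightarrow> x \<in># leaves (Node s ts)"
  by (auto dest!: multi_member_split)

lemma sub_leaf: "Leaf x \<in># sub r t \<Longrightarrow> x \<in># leaves t"
proof (induction t)
  case (Node s ts)
  show ?case
  proof (cases "Leaf x \<in># ts")
    case True
    then show ?thesis using leaves_child[of x "Leaf x" ts s] by simp
  next
    case False
    then have "Leaf x \<in># \<Sum>\<^sub># (image_mset (sub r) ts)" using Node.prems by (auto split: if_splits)
    then obtain t where "t \<in># ts" "Leaf x \<in># sub r t" by auto
    then show ?thesis using Node.IH leaves_child by blast
  qed
qed auto

lemma top_leaves:
  assumes "wf_rtree (Node r ts)" "\<forall>s\<in>#ranks (Node r ts). s \<le> r"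
  shows "\<exists>a b. ts = {#Leaf a, Leaf b#}"
proof -
  have lf: "is_leaf t" if "t \<in># ts" for t
  proof (cases t)
    case (Node s' ts')
    then have "r < s'" using assms that by auto
    moreover have "s' \<in># ranks (Node r ts)" using ranks_child[of s' t ts r] Node that by simp
    ultimately show ?thesis using assms by fastforce
  qed auto
  have "size ts = 2" using assms by simp
  then have "size ts = Suc (Suc 0)" by simp
  then obtain x B where xB: "ts = {#x#} + B" "size B = Suc 0" by (rule size_mset_SucE)
  then obtain y C where yC: "B = {#y#} + C" "size C = 0" by (metis size_mset_SucE)
  then have ts: "ts = {#x, y#}" using xB by simp
  have "is_leaf x" "is_leaf y" using lf ts by auto
  then obtain a b where "x = Leaf a" "y = Leaf b"
    by (cases x; cases y) auto
  then show ?thesis using ts by auto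
qed


lemma sub_leaves_top:
  "\<forall>t\<in>#ts. is_leaf t \<Longrightarrow> \<Sum>\<^sub># (image_mset (sub r) ts) = {#}"
proof -
  assume "\<forall>t\<in>#ts. is_leaf t"
  then have "\<Sum>\<^sub># (image_mset (sub r) ts) = \<Sum>\<^sub># (image_mset (\<lambda>_. {#}) ts)"
    by (intro arg_cong[where f=sum_mset] image_mset_cong) (metis is_leaf.simps(2) rtree.exhaust sub.simps(1))
  then show ?thesis by simp
qed

lemma cherry_exists:
  "wf_rtree t \<Longrightarrow> \<forall>s\<in>#ranks t. s \<le> r \<Longrightarrow> count (ranks t) r = 1 \<Longrightarrow> \<exists>a b. sub r t = {#Leaf a, Leaf b#}"
proof (induction t)
  case (Leaf x)
  then show ?case by simp
next
  case (Node s ts)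
  show ?case
  proof (cases "s = r")
    case True
    then obtain a b where ts: "ts = {#Leaf a, Leaf b#}" using top_leaves Node.prems by blast
    then show ?thesis using True by auto
  next
    case False
    then have "count (\<Sum>\<^sub># (image_mset ranks ts)) r = 1" using Node.prems by simp
    then obtain t0 ts' where ts: "ts = add_mset t0 ts'" "count (ranks t0) r = 1" "\<forall>t\<in>#ts'. r \<notin># ranks t"
      using split_r[of ts r] by blast
    have z: "\<Sum>\<^sub># (image_mset (sub r) ts') = {#}"
      using ts(3) by (induction ts') (auto simp: sub_zero)
    have "\<forall>s\<in>#ranks t0. s \<le> r"
    proof
      fix x assume "x \<in># ranks t0"
      then have "x \<in># ranks (Node s ts)" by (rule ranks_child) (simp add: ts)
      then show "x \<le> r" using Node.prems(2) by blast
    qed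
    moreover have "wf_rtree t0" using Node.prems ts by simp
    ultimately have "\<exists>a b. sub r t0 = {#Leaf a, Leaf b#}" using Node.IH[of t0] ts by simp
    then obtain a b where "sub r t0 = {#Leaf a, Leaf b#}" by blast
    moreover have "sub r (Node s ts) = sub r t0 + \<Sum>\<^sub># (image_mset (sub r) ts')" using False ts by simp
    ultimately show ?thesis using z by auto
  qed
qed

lemma cherry_cut:
  "wf_rtree t \<Longrightarrow> \<forall>s\<in>#ranks t. s \<le> r \<Longrightarrow> count (ranks t) r = 1 \<Longrightarrow> (\<forall>x. count (leaves t) x \<le> 1)
   \<Longrightarrow> sub r t = {#Leaf a, Leaf b#} \<Longrightarrow>
   graft a b r (cut a r t) = t \<and> leaves (cut a r t) + {#b#} = leaves t \<and>
   ranks (cut a r t) + {#r#} = ranks t \<and> wf_rtree (cut a r t)"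
proof (induction t)
  case (Leaf x)
  then show ?case by simp
next
  case (Node s ts)
  show ?case
  proof (cases "s = r")
    case True
    then obtain a' b' where ts: "ts = {#Leaf a', Leaf b'#}" using top_leaves Node.prems by blast
    then have "{#Leaf a', Leaf b'#} = {#Leaf a, Leaf b#}" using True Node.prems by auto
    then have "ts = {#Leaf a, Leaf b#}" using ts by simp
    then show ?thesis using True by auto
  next
    case False
    then have "count (\<Sum>\<^sub># (image_mset ranks ts)) r = 1" using Node.prems by simp
    then obtain t0 ts' where ts: "ts = add_mset t0 ts'" "count (ranks t0) r = 1" "\<forall>t\<in>#ts'. r \<notin># ranks t"
      using split_r[of ts r] by blast
    have z: "\<Sum>\<^sub># (image_mset (sub r) ts') = {#}"
      using ts(3) by (induction ts') (auto simp: sub_zero)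
    have "\<forall>s\<in>#ranks t0. s \<le> r"
    proof
      fix x assume "x \<in># ranks t0"
      then have "x \<in># ranks (Node s ts)" by (rule ranks_child) (simp add: ts)
      then show "x \<le> r" using Node.prems(2) by blast
    qed
    moreover have wf0: "wf_rtree t0" using Node.prems ts by simp
    moreover have "\<forall>x. count (leaves t0) x \<le> 1"
    proof
      fix x
      have "count (leaves t0) x \<le> count (leaves (Node s ts)) x" using ts by simp
      then show "count (leaves t0) x \<le> 1" using Node.prems(4) le_trans by blast
    qed
    moreover have sub0: "sub r t0 = {#Leaf a, Leaf b#}"
    proof -
      have "sub r (Node s ts) = sub r t0 + \<Sum>\<^sub># (image_mset (sub r) ts')" using False ts by simp
      also have "\<dots> = sub r t0" using z by simp
      finally show ?thesis using Node.prems(5) by simp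
    qed
    ultimately have IH: "graft a b r (cut a r t0) = t0 \<and> leaves (cut a r t0) + {#b#} = leaves t0 \<and>
      ranks (cut a r t0) + {#r#} = ranks t0 \<and> wf_rtree (cut a r t0)"
      using Node.IH[of t0] ts by simp
    have a0: "a \<in># leaves t0" using sub0 sub_leaf[of a r t0] by simp
    have "count (leaves (Node s ts)) a = count (leaves t0) a + count (\<Sum>\<^sub># (image_mset leaves ts')) a"
      using ts by simp
    then have "count (\<Sum>\<^sub># (image_mset leaves ts')) a = 0"
      using Node.prems(4)[rule_format, of a] a0 by (simp add: count_greater_zero_iff[symmetric] del: count_greater_zero_iff)
    then have na: "\<forall>t\<in>#ts'. a \<notin># leaves t" using count_sum_zero[of leaves ts' a] by blast
    have c1: "image_mset (cut a r) ts' = ts'"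
      using ts(3) by (rule image_cut_id)
    have g1: "image_mset (graft a b r) ts' = ts'"
      using na by (rule image_graft_id)
    have ct: "cut a r (Node s ts) = Node s (add_mset (cut a r t0) ts')"
      using False ts c1 by simp
    have wfc: "wf_rtree (cut a r (Node s ts))"
    proof -
      have "child_ok s (cut a r t0)" using Node.prems(1) ts by (intro child_ok_cut) simp
      moreover have "size (add_mset (cut a r t0) ts') = 2" using Node.prems(1) ts by simp
      moreover have "\<forall>t\<in>#ts'. child_ok s t \<and> wf_rtree t" using Node.prems(1) ts by simp
      ultimately show ?thesis unfolding ct using IH by simp
    qed
    have p1: "graft a b r (cut a r (Node s ts)) = Node s ts"
      unfolding ct using IH g1 ts by simp
    have "leaves (cut a r (Node s ts)) + {#b#} = (leaves (cut a r t0) + {#b#}) + \<Sum>\<^sub># (image_mset leaves ts')"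
      unfolding ct by (simp add: union_ac)
    then have p2: "leaves (cut a r (Node s ts)) + {#b#} = leaves (Node s ts)"
      using IH ts by simp
    have "ranks (cut a r (Node s ts)) + {#r#} = add_mset s ((ranks (cut a r t0) + {#r#}) + \<Sum>\<^sub># (image_mset ranks ts'))"
      unfolding ct by (simp add: union_ac)
    also have "\<dots> = add_mset s (ranks t0 + \<Sum>\<^sub># (image_mset ranks ts'))"
      using IH by (simp only: union_ac)
    also have "\<dots> = ranks (Node s ts)" using ts by simp
    finally have p3: "ranks (cut a r (Node s ts)) + {#r#} = ranks (Node s ts)" .
    show ?thesis using p1 p2 p3 wfc by blast
  qed
qed



definition W :: "nat set \<Rightarrow> rtree set" where
  "W L = {t. wf_rtree t \<and> leaves t = mset_set L \<and> ranks t = mset_set {1..<card L}}"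

lemma pair_mset_eq: "{#x, y#} = {#u, v#} \<Longrightarrow> (x = u \<and> y = v) \<or> (x = v \<and> y = u)"
  by (auto simp: add_eq_conv_diff)

lemma mset_set_upt_Suc: "1 \<le> n \<Longrightarrow> mset_set {1..<Suc n} = add_mset n (mset_set {1..<n})"
proof -
  assume "1 \<le> n"
  then have "{1..<Suc n} = insert n {1..<n}" by auto
  then show ?thesis by simp
qed

lemma count_mset_set_le1: "count (mset_set A) x \<le> 1"
  by (cases "finite A"; cases "x \<in> A") auto

lemma count_mset_set_le1': "count (mset_set A) x \<le> Suc 0"
  using count_mset_set_le1 by simp

lemma graft_in_W:
  assumes "finite L" "card L = Suc n" "1 \<le> n" "b \<in> L" "a \<in> L - {b}" "t \<in> W (L - {b})"
  shows "graft a b n t \<in> W L"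
proof -
  have cL: "card (L - {b}) = n" using assms by simp
  have lt: "leaves t = mset_set (L - {b})" and rt: "ranks t = mset_set {1..<n}" and wt: "wf_rtree t"
    using assms(6) cL by (auto simp: W_def)
  have ca: "count (leaves t) a = 1" using lt assms by (simp add: count_mset_set)
  have "wf_rtree (graft a b n t)" using wt rt by (intro wf_graft) auto
  moreover have "leaves (graft a b n t) = mset_set L"
    using leaves_graft[of a b n t] ca lt assms mset_set.remove[of L b] by simp
  moreover have "ranks (graft a b n t) = mset_set {1..<card L}"
    using ranks_graft[of a b n t] ca rt assms mset_set_upt_Suc[of n] by simp
  ultimately show ?thesis by (simp add: W_def)
qed


lemma cut_in_W:
  assumes L: "finite L" "card L = Suc n" "1 \<le> n" and T: "T \<in> W L"
    and sb: "sub n T = {#Leaf a, Leaf b#}"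
  shows "a \<noteq> b \<and> b \<in> L \<and> a \<in> L - {b} \<and> cut a n T \<in> W (L - {b}) \<and> graft a b n (cut a n T) = T"
proof -
  have lT: "leaves T = mset_set L" and rT: "ranks T = mset_set {1..<Suc n}" and wT: "wf_rtree T"
    using T L by (auto simp: W_def)
  have G: "graft a b n (cut a n T) = T \<and> leaves (cut a n T) + {#b#} = leaves T \<and>
   ranks (cut a n T) + {#n#} = ranks T \<and> wf_rtree (cut a n T)"
    using L by (intro cherry_cut wT sb) (auto simp: rT lT count_mset_set_le1 count_mset_set_le1')
  have "leaves T = leaves (cut a n T) + replicate_mset (count (leaves (cut a n T)) a) b"
    using leaves_graft[of a b n "cut a n T"] G by simp
  then have "replicate_mset (count (leaves (cut a n T)) a) b = {#b#}" using G by simp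
  then have "size (replicate_mset (count (leaves (cut a n T)) a) b) = size {#b#}" by (rule arg_cong)
  then have ca: "count (leaves (cut a n T)) a = 1" by simp
  have bL: "b \<in> L" using sub_leaf[of b n T] sb lT L by simp
  have aL: "a \<in> L" using sub_leaf[of a n T] sb lT L by simp
  have ab: "a \<noteq> b"
  proof
    assume "a = b"
    have "count (leaves T) a = count (leaves (cut a n T) + {#b#}) a" using G by simp
    then have "count (leaves T) a = 2" using ca \<open>a = b\<close> by simp
    then show False using lT count_mset_set_le1[of L a] by simp
  qed
  have e1: "leaves (cut a n T) + {#b#} = mset_set L" using G lT by simp
  have "leaves (cut a n T) = mset_set L - {#b#}" unfolding e1[symmetric] by simp
  also have "\<dots> = mset_set (L - {b})" using mset_set_Diff[of L "{b}"] L bL by simp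
  finally have lc: "leaves (cut a n T) = mset_set (L - {b})" .
  have e2: "ranks (cut a n T) + {#n#} = mset_set {1..<Suc n}" using G rT by simp
  have "ranks (cut a n T) = mset_set {1..<Suc n} - {#n#}" unfolding e2[symmetric] by simp
  also have "\<dots> = mset_set {1..<n}" using mset_set_upt_Suc[of n] L by simp
  finally have rc: "ranks (cut a n T) = mset_set {1..<card (L - {b})}" using L bL by simp
  show ?thesis using ab bL aL lc rc G by (simp add: W_def)
qed

lemma fiber_card:
  assumes L: "finite L" "card L = Suc n" "1 \<le> n" and T: "T \<in> W L"
  shows "card {x \<in> Sigma L (\<lambda>b. (L - {b}) \<times> W (L - {b})). (case x of (b, a, t) \<Rightarrow> graft a b n t) = T} = 2"
proof -
  have lT: "leaves T = mset_set L" and rT: "ranks T = mset_set {1..<Suc n}" and wT: "wf_rtree T"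
    using T L by (auto simp: W_def)
  have r1: "\<forall>s\<in>#ranks T. s \<le> n" using rT by auto
  have r2: "count (ranks T) n = 1" using rT L by simp
  obtain a b where sb: "sub n T = {#Leaf a, Leaf b#}"
    using cherry_exists[OF wT r1 r2] by blast
  have sb': "sub n T = {#Leaf b, Leaf a#}" using sb by (simp add: add_mset_commute)
  note C1 = cut_in_W[OF L T sb] and C2 = cut_in_W[OF L T sb']
  define F where "F = {x \<in> Sigma L (\<lambda>b. (L - {b}) \<times> W (L - {b})). (case x of (b, a, t) \<Rightarrow> graft a b n t) = T}"
  have "F = {(b, a, cut a n T), (a, b, cut b n T)}"
  proof (intro equalityI subsetI)
    fix x assume "x \<in> F"
    then obtain b' a' t where x: "x = (b', a', t)" "b' \<in> L" "a' \<in> L - {b'}" "t \<in> W (L - {b'})"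
      "graft a' b' n t = T" by (auto simp: F_def)
    have cL: "card (L - {b'}) = n" using x L by simp
    have lt: "leaves t = mset_set (L - {b'})" and rt: "ranks t = mset_set {1..<n}"
      using x(4) cL by (auto simp: W_def)
    have nr: "n \<notin># ranks t" using rt L by simp
    have ca: "count (leaves t) a' = 1" using lt x L by (simp add: count_mset_set)
    have "sub n T = {#Leaf a', Leaf b'#}"
      using sub_graft[OF nr, of a' b'] x(5) ca by simp
    then have "(a' = a \<and> b' = b) \<or> (a' = b \<and> b' = a)" using sb pair_mset_eq by fastforce
    moreover have "t = cut a' n T" using cut_graft[OF nr, of a' b'] x(5) by simp
    ultimately show "x \<in> {(b, a, cut a n T), (a, b, cut b n T)}" using x by auto
  next
    fix x assume "x \<in> {(b, a, cut a n T), (a, b, cut b n T)}"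
    then show "x \<in> F" using C1 C2 by (auto simp: F_def)
  qed
  moreover have "a \<noteq> b" using C1 by simp
  ultimately have "card F = 2" by simp
  then show ?thesis by (simp add: F_def)
qed



lemma double_count:
  fixes g :: "rtree \<Rightarrow> nat"
  assumes L: "finite L" "card L = Suc n" "1 \<le> n" and fin: "\<forall>b\<in>L. finite (W (L - {b}))"
  shows "finite (W L) \<and>
    (\<Sum>b\<in>L. \<Sum>a\<in>L - {b}. \<Sum>t\<in>W (L - {b}). g (graft a b n t)) = 2 * (\<Sum>T\<in>W L. g T)"
proof -
  define P where "P = Sigma L (\<lambda>b. (L - {b}) \<times> W (L - {b}))"
  define h where "h = (\<lambda>x. case x of (b, a, t) \<Rightarrow> graft a b n t)"
  have fP: "finite P" unfolding P_def using L fin by (intro finite_SigmaI finite_cartesian_product) auto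
  have hP: "h ` P \<subseteq> W L" unfolding P_def h_def using graft_in_W[OF L] by auto
  have fib: "card {x \<in> P. h x = T} = 2" if "T \<in> W L" for T
    using fiber_card[OF L that] unfolding P_def h_def by simp
  have "W L \<subseteq> h ` P"
  proof
    fix T assume T: "T \<in> W L"
    then have "{x \<in> P. h x = T} \<noteq> {}" using fib[OF T] by (metis card.empty zero_neq_numeral)
    then show "T \<in> h ` P" by auto
  qed
  then have fW: "finite (W L)" using fP finite_surj by blast
  have "(\<Sum>b\<in>L. \<Sum>a\<in>L - {b}. \<Sum>t\<in>W (L - {b}). g (graft a b n t)) = (\<Sum>x\<in>P. g (h x))"
  proof -
    have "(\<Sum>b\<in>L. \<Sum>a\<in>L - {b}. \<Sum>t\<in>W (L - {b}). g (graft a b n t))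
       = (\<Sum>b\<in>L. \<Sum>y\<in>(L - {b}) \<times> W (L - {b}). g (h (b, y)))"
      by (intro sum.cong refl, subst sum.cartesian_product) (auto simp: h_def case_prod_beta)
    also have "\<dots> = (\<Sum>x\<in>P. g (h x))"
      unfolding P_def using L fin by (subst sum.Sigma) (auto simp: case_prod_beta)
    finally show ?thesis .
  qed
  also have "\<dots> = (\<Sum>T\<in>W L. \<Sum>x\<in>{x \<in> P. h x = T}. g (h x))"
    using sum.group[OF fP fW hP, of "\<lambda>x. g (h x)"] by simp
  also have "\<dots> = (\<Sum>T\<in>W L. 2 * g T)"
  proof (intro sum.cong refl)
    fix T assume T: "T \<in> W L"
    have "(\<Sum>x\<in>{x \<in> P. h x = T}. g (h x)) = (\<Sum>x\<in>{x \<in> P. h x = T}. g T)" by simp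
    also have "\<dots> = 2 * g T" using fib[OF T] by simp
    finally show "(\<Sum>x\<in>{x \<in> P. h x = T}. g (h x)) = 2 * g T" .
  qed
  also have "\<dots> = 2 * (\<Sum>T\<in>W L. g T)" by (simp add: sum_distrib_left)
  finally show ?thesis using fW by simp
qed



lemma W_one:
  assumes "card L = 1"
  shows "\<exists>x. W L = {Leaf x}"
proof -
  obtain x where L: "L = {x}" using assms card_1_singletonE by blast
  have "W L = {Leaf x}"
  proof (intro equalityI subsetI)
    fix t assume t: "t \<in> W L"
    then have r: "ranks t = {#}" and l: "leaves t = {#x#}" using L by (auto simp: W_def)
    then show "t \<in> {Leaf x}" by (cases t) auto
  next
    fix t assume "t \<in> {Leaf x}"
    then show "t \<in> W L" using L by (simp add: W_def)
  qed
  then show ?thesis by blast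
qed

lemma B_graft_top:
  assumes "n \<notin># ranks t" "count (leaves t) a = 1"
  shows "B n (graft a b n t) = 2"
  using B_graft[OF assms(1), of n a b] B_zero[OF assms(1)] pa_zero[OF assms(1)] assms(2) by simp

lemma B_graft_low:
  assumes "n \<notin># ranks t" "j \<noteq> n"
  shows "B j (graft a b n t) + pa j a t = B j t"
  using B_graft[OF assms(1), of j a b] assms(2) by simp

lemma main:
  "finite L \<Longrightarrow> card L = Suc m \<Longrightarrow> finite (W L) \<and> W L \<noteq> {} \<and>
    (\<forall>j. 1 \<le> j \<and> j \<le> m \<longrightarrow> m * (\<Sum>T\<in>W L. B j T) = 2 * j * card (W L))"
proof (induction m arbitrary: L)
  case 0
  then obtain x where "W L = {Leaf x}" using W_one by auto
  then show ?case by simp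
next
  case (Suc m)
  let ?n = "Suc m"
  have L: "finite L" "card L = Suc ?n" "1 \<le> ?n" using Suc.prems by auto
  have cb: "card (L - {b}) = Suc m" if "b \<in> L" for b using L that by simp
  have IH: "finite (W (L - {b})) \<and> W (L - {b}) \<noteq> {} \<and>
    (\<forall>j. 1 \<le> j \<and> j \<le> m \<longrightarrow> m * (\<Sum>T\<in>W (L - {b}). B j T) = 2 * j * card (W (L - {b})))"
    if "b \<in> L" for b using Suc.IH[of "L - {b}"] cb[OF that] L by simp
  have fin: "\<forall>b\<in>L. finite (W (L - {b}))" using IH by blast
  note DC = double_count[OF L fin]
  have fW: "finite (W L)" using DC by blast
  have tW: "t \<in> W (L - {b}) \<Longrightarrow> b \<in> L \<Longrightarrow> n \<notin># ranks t \<and> (\<forall>a\<in>L - {b}. count (leaves t) a = 1)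
            \<and> set_mset (leaves t) = L - {b}" if "n \<ge> Suc m" for t b n
    using that cb L by (auto simp: W_def)
  have cnt: "(\<Sum>b\<in>L. ?n * card (W (L - {b}))) = 2 * card (W L)"
  proof -
    have "(\<Sum>b\<in>L. \<Sum>a\<in>L - {b}. \<Sum>t\<in>W (L - {b}). (\<lambda>_. 1::nat) (graft a b ?n t)) = 2 * (\<Sum>T\<in>W L. (\<lambda>_. 1::nat) T)"
      using DC[of "\<lambda>_. 1"] by simp
    moreover have "(\<Sum>b\<in>L. \<Sum>a\<in>L - {b}. \<Sum>t\<in>W (L - {b}). (\<lambda>_. 1::nat) (graft a b ?n t)) = (\<Sum>b\<in>L. ?n * card (W (L - {b})))"
      using cb by (intro sum.cong refl) simp
    ultimately show ?thesis by simp
  qed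
  have ne: "W L \<noteq> {}"
  proof -
    obtain b where b: "b \<in> L" using L by fastforce
    then have "L - {b} \<noteq> {}" using cb[OF b] by fastforce
    then obtain a where a: "a \<in> L - {b}" by blast
    obtain t where t: "t \<in> W (L - {b})" using IH[OF b] by blast
    show ?thesis using graft_in_W[OF L b a t] by blast
  qed
  have formula: "?n * (\<Sum>T\<in>W L. B j T) = 2 * j * card (W L)" if j: "1 \<le> j" "j \<le> ?n" for j
  proof (cases "j = ?n")
    case True
    have "2 * (\<Sum>T\<in>W L. B j T) = (\<Sum>b\<in>L. \<Sum>a\<in>L - {b}. \<Sum>t\<in>W (L - {b}). B ?n (graft a b ?n t))"
      using DC True by simp
    also have "\<dots> = (\<Sum>b\<in>L. \<Sum>a\<in>L - {b}. \<Sum>t\<in>W (L - {b}). 2)"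
    proof (intro sum.cong refl)
      fix b a t assume "b \<in> L" "a \<in> L - {b}" "t \<in> W (L - {b})"
      then show "B ?n (graft a b ?n t) = 2" using tW[of ?n t b] by (intro B_graft_top) auto
    qed
    also have "\<dots> = 2 * (\<Sum>b\<in>L. ?n * card (W (L - {b})))"
      using cb by (simp add: sum_distrib_left algebra_simps)
    also have "\<dots> = 2 * (2 * card (W L))" using cnt by simp
    finally have "(\<Sum>T\<in>W L. B j T) = 2 * card (W L)" by simp
    then show ?thesis using True by simp
  next
    case False
    then have jm: "j \<le> m" using j by simp
    have inner: "(\<Sum>a\<in>L - {b}. \<Sum>t\<in>W (L - {b}). B j (graft a b ?n t)) = 2 * j * card (W (L - {b}))"
      if b: "b \<in> L" for b
    proof -
      have "(\<Sum>a\<in>L - {b}. \<Sum>t\<in>W (L - {b}). B j (graft a b ?n t)) + (\<Sum>t\<in>W (L - {b}). B j t)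
          = (\<Sum>t\<in>W (L - {b}). (\<Sum>a\<in>L - {b}. B j (graft a b ?n t)) + (\<Sum>a\<in>L - {b}. pa j a t))"
      proof -
        have "(\<Sum>t\<in>W (L - {b}). B j t) = (\<Sum>t\<in>W (L - {b}). (\<Sum>a\<in>L - {b}. pa j a t))"
          using tW[of ?n _ b] b L by (intro sum.cong refl sum_pa[symmetric]) auto
        then show ?thesis by (simp add: sum.distrib sum.swap[of _ "L - {b}"])
      qed
      also have "\<dots> = (\<Sum>t\<in>W (L - {b}). (\<Sum>a\<in>L - {b}. B j t))"
      proof (intro sum.cong refl)
        fix t assume t: "t \<in> W (L - {b})"
        have "(\<Sum>a\<in>L - {b}. B j (graft a b ?n t)) + (\<Sum>a\<in>L - {b}. pa j a t)
            = (\<Sum>a\<in>L - {b}. B j (graft a b ?n t) + pa j a t)" by (simp add: sum.distrib)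
        also have "\<dots> = (\<Sum>a\<in>L - {b}. B j t)"
          using tW[of ?n t b] t b False by (intro sum.cong refl B_graft_low) auto
        finally show "(\<Sum>a\<in>L - {b}. B j (graft a b ?n t)) + (\<Sum>a\<in>L - {b}. pa j a t) = (\<Sum>a\<in>L - {b}. B j t)" .
      qed
      also have "\<dots> = ?n * (\<Sum>t\<in>W (L - {b}). B j t)"
        using cb[OF b] by (simp add: sum_distrib_left)
      finally have "(\<Sum>a\<in>L - {b}. \<Sum>t\<in>W (L - {b}). B j (graft a b ?n t)) = m * (\<Sum>t\<in>W (L - {b}). B j t)"
        by simp
      also have "\<dots> = 2 * j * card (W (L - {b}))" using IH[OF b] j jm by blast
      finally show ?thesis .
    qed
    have "2 * (\<Sum>T\<in>W L. B j T) = (\<Sum>b\<in>L. \<Sum>a\<in>L - {b}. \<Sum>t\<in>W (L - {b}). B j (graft a b ?n t))"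
      using DC by simp
    also have "\<dots> = (\<Sum>b\<in>L. 2 * j * card (W (L - {b})))"
      using inner by (intro sum.cong refl) auto
    finally have "?n * (2 * (\<Sum>T\<in>W L. B j T)) = 2 * j * (\<Sum>b\<in>L. ?n * card (W (L - {b})))"
      by (simp add: sum_distrib_left algebra_simps)
    also have "\<dots> = 2 * j * (2 * card (W L))" using cnt by simp
    finally show ?thesis by simp
  qed
  show ?case using fW ne formula by blast
qed



lemma two_choose: "2 * (n choose 2) = n * (n - 1)"
proof -
  have "even (n * (n - 1))" by (cases "even n") auto
  then show ?thesis by (simp add: choose_two)
qed

lemma aux_real:
  fixes s N c m1 nn j :: real
  assumes A: "m1 * s = 2 * j * N" and Cc: "2 * c = nn * m1" and p: "nn > 0" "N > 0" "m1 > 0"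
  shows "s / (nn * N) = j / c"
proof -
  have c0: "c > 0" using Cc p by (smt (verit) mult_pos_pos)
  have "2 * (s * c) = s * (2 * c)" by simp
  also have "\<dots> = nn * (m1 * s)" using Cc by simp
  also have "\<dots> = 2 * (j * (nn * N))" using A by simp
  finally have e: "s * c = j * (nn * N)" by simp
  show ?thesis using e c0 p by (simp add: frac_eq_eq)
qed

theorem corollary3:
  fixes n j :: nat
  assumes "n \<ge> 2" and "1 \<le> j" and "j \<le> n - 1"
  shows "measure_pmf.expectation (pmf_of_set (ranked_trees n)) (\<lambda>w. real (B j w) / real n)
           = real j / real (n choose 2)"
proof -
  define L where "L = {1..<n+1}"
  have RT: "ranked_trees n = W L" unfolding L_def ranked_trees_def W_def mset_upt by (simp del: upt_Suc)
  have cL: "card L = Suc (n - 1)" using assms unfolding L_def by simp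
  have M: "finite (W L) \<and> W L \<noteq> {} \<and>
    (\<forall>j. 1 \<le> j \<and> j \<le> n - 1 \<longrightarrow> (n - 1) * (\<Sum>T\<in>W L. B j T) = 2 * j * card (W L))"
    using main[OF _ cL] unfolding L_def by simp
  then have fW: "finite (W L)" and nW: "W L \<noteq> {}"
    and F: "(n - 1) * (\<Sum>T\<in>W L. B j T) = 2 * j * card (W L)" using assms by auto
  let ?S = "(\<Sum>T\<in>W L. B j T)" and ?N = "card (W L)"
  have Npos: "?N > 0" using fW nW by (simp add: card_gt_0_iff)
  have Fr: "real (n - 1) * real ?S = 2 * real j * real ?N"
    using arg_cong[OF F, of real] by simp
  have C: "2 * real (n choose 2) = real n * real (n - 1)"
    using arg_cong[OF two_choose[of n], of real] by simp
  have n1: "real (n - 1) > 0" "real n > 0" using assms by auto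
  have "measure_pmf.expectation (pmf_of_set (ranked_trees n)) (\<lambda>w. real (B j w) / real n)
      = (\<Sum>w\<in>W L. real (B j w) / real n) / real ?N"
    unfolding RT by (rule integral_pmf_of_set[OF nW fW])
  also have "\<dots> = real ?S / (real n * real ?N)"
    by (simp add: sum_divide_distrib[symmetric])
  also have "\<dots> = real j / real (n choose 2)"
    by (rule aux_real[OF Fr C n1(2) _ n1(1)]) (use Npos in simp)
  finally show ?thesis .
qed


end
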